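(* Let $U$ be a countably infinite universe, $\mathcal{C}=(L_1,L_2,\ldots)$ a countably infinite collection of languages over $U$, and consider the Noisy Procedure in the context. For any $n\ge0$, $i\ge1$, and any step $l\ge p(n,i)$ (where $p(n,i)$ is the position of $(n,i)$ in the diagonal order), let $k$ be the position of the entry $L_{n,i}$ in $\mathcal{C}'_l=(L'_1,\ldots,L'_l)$ at the end of step $l$. Then $T(L_{n,i})$ is a set of maximum size among all sets $T$ satisfying: $T$ is finite, and there exists a subcollection $\mathcal{D}$ of the entries $(L'_1,\ldots,L'_k)$ that includes $L'_k$, whose intersection $\bigcap_{L_{a,b}\in\mathcal{D}}L_b$ is finite, and such that $T$ is $a$-contained in $L_b$ for every entry $L_{a,b}\in\mathcal{D}$.
   Context: A language is an infinite subset of $U$; a collection is a sequence of languages (repetitions allowed, entries distinguished by index). For a set $T$, language $L$ and integer $a\ge0$, $T$ is $a$-contained in $L$ if $\sum_{x\in T}\mathbf{1}[x\notin L]\le a$. Diagonal order: pairs $(n,i)$, $n\ge0$, $i\ge1$, ordered as $(0,1),(1,1),(0,2),(2,1),(1,2),(0,3),\ldots$, i.e. for $n'=0,1,2,\ldots$ and $h=0,\ldots,n'$ the pair $(n'-h,h+1)$. Each pair $(a,b)$ has an entry $L_{a,b}$, a copy of $L_b$ labelled $(a,b)$. Noisy Procedure. Set $\mathcal{C}'_0=()$. For $l=1,2,\ldots$, let $(n,i)$ be the $l$-th pair; append $L_{n,i}$ to the end of $\mathcal{C}'_{l-1}$ to get $\mathcal{C}'_l=(L'_1,\ldots,L'_l)$,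 set $j=l$. Repeat: (A) let $T$ be a finite subset of $U$ of largest size for which there is a subcollection $\mathcal{D}$ of the entries $(L'_1,\ldots,L'_j)$ including $L'_j$, with $T$ $a$-contained in $L_b$ for every entry $L_{a,b}\in\mathcal{D}$ and $\bigcap_{L_{a,b}\in\mathcal{D}}L_b$ finite; let $\mathcal{C}_{\mathrm{chk}}$ be such a $\mathcal{D}$ and $m_{\mathrm{chk}}=|T|$ ($0$ if no such $\mathcal{D}$ exists). (B) If $j\le1$ or $m_{\mathrm{chk}}>m^\star_a(L_b)$ where $L'_{j-1}=L_{a,b}$, stop. (C) Otherwise swap the entries at positions $j-1,j$ in $\mathcal{C}'_l$, set $j\leftarrow j-1$, return to (A). On stopping, set $T(L_{n,i})=T$, $\mathcal{C}(L_{n,i})=\mathcal{C}_{\mathrm{chk}}$, $m^\star_n(L_i)=m_{\mathrm{chk}}$; the ordering $\mathcal{C}'_l$ at the end of step $l$ is the one obtained when this loop stops. *)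

theory Defs
  imports Main "HOL-Library.Countable_Set"
begin

text \<open>Entries L_{a,b} are represented by pairs (a,b) :: nat \<times> nat; the
  collection is L :: nat \<Rightarrow> 'u set, indexed from 1 (L 0 unused).
  An ordering C'_l is a list of entries.\<close>

definition diag :: "nat \<Rightarrow> nat \<times> nat" where
  "diag l = concat (map (\<lambda>n'. map (\<lambda>h. (n' - h, Suc h)) [0..<Suc n']) [0..<l]) ! (l - 1)"

definition diag_pos :: "nat \<times> nat \<Rightarrow> nat" where
  "diag_pos e = (LEAST l. 1 \<le> l \<and> diag l = e)"

definition acont :: "nat \<Rightarrow> 'u set \<Rightarrow> 'u set \<Rightarrow> bool" where
  "acont a T L \<longleftrightarrow> card (T - L) \<le> a"

definition adm :: "(nat \<Rightarrow> 'u set) \<Rightarrow> (nat \<times> nat) list \<Rightarrow> 'u set \<Rightarrow> nat set \<Rightarrow> bool" where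
  "adm L E T D \<longleftrightarrow> E \<noteq> [] \<and> finite T \<and> D \<subseteq> {..<length E} \<and> length E - 1 \<in> D
     \<and> finite (\<Inter>d\<in>D. L (snd (E ! d)))
     \<and> (\<forall>d\<in>D. acont (fst (E ! d)) T (L (snd (E ! d))))"

definition mchk :: "(nat \<Rightarrow> 'u set) \<Rightarrow> (nat \<times> nat) list \<Rightarrow> nat" where
  "mchk L E = (if \<exists>T D. adm L E T D then Max {card T | T. \<exists>D. adm L E T D} else 0)"

text \<open>The new entry ends at
  0-based position q, i.e. the inner loop stops at j = q+1. For every j with
  q+1 < j \<le> l the loop continued (swap), at j = q+1 it stopped.
  Tset / mstar record T(L_{n,i}) and m*_n(L_i); if no admissible D exists, T := {}.\<close>
definition step_ok :: "(nat \<Rightarrow> 'u set) \<Rightarrow> (nat \<Rightarrow> (nat \<times> nat) list)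
    \<Rightarrow> (nat \<times> nat \<Rightarrow> 'u set) \<Rightarrow> (nat \<times> nat \<Rightarrow> nat) \<Rightarrow> nat \<Rightarrow> bool" where
  "step_ok L ord Tset mstar l \<longleftrightarrow>
    (let prev = ord (l - 1); new = diag l in
     \<exists>q \<le> l - 1.
       ord l = take q prev @ new # drop q prev
     \<and> (\<forall>j. q + 1 < j \<and> j \<le> l \<longrightarrow>
            mchk L (take (j - 1) prev @ [new]) \<le> mstar (prev ! (j - 2)))
     \<and> (q = 0 \<or> mstar (prev ! (q - 1)) < mchk L (take q prev @ [new]))
     \<and> mstar new = mchk L (take q prev @ [new])
     \<and> (if \<exists>T D. adm L (take q prev @ [new]) T D
        then (\<exists>D. adm L (take q prev @ [new]) (Tset new) D)
             \<and> (\<forall>T D. adm L (take q prev @ [new]) T D \<longrightarrow> card T \<le> card (Tset new))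
        else Tset new = {}))"

definition noisy_run :: "(nat \<Rightarrow> 'u set) \<Rightarrow> (nat \<Rightarrow> (nat \<times> nat) list)
    \<Rightarrow> (nat \<times> nat \<Rightarrow> 'u set) \<Rightarrow> (nat \<times> nat \<Rightarrow> nat) \<Rightarrow> bool" where
  "noisy_run L ord Tset mstar \<longleftrightarrow> ord 0 = [] \<and> (\<forall>l \<ge> 1. step_ok L ord Tset mstar l)"

end

theory Submission
  imports Defs
begin


definition row :: "nat \<Rightarrow> (nat \<times> nat) list" where
  "row n' = map (\<lambda>h. (n' - h, Suc h)) [0..<Suc n']"
definition dl :: "nat \<Rightarrow> (nat \<times> nat) list" where
  "dl N = concat (map row [0..<N])"

lemma diag_dl: "diag l = dl l ! (l - 1)"
  unfolding diag_def dl_def row_def by simp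

lemma dl_Suc: "dl (Suc N) = dl N @ row N"
  unfolding dl_def by simp

lemma len_dl: "N \<le> length (dl N)"
  by (induction N) (auto simp: dl_Suc row_def dl_def)

lemma set_dl: "e \<in> set (dl N) \<Longrightarrow> fst e + snd e \<le> N"
  by (induction N) (auto simp: dl_Suc row_def dl_def)

lemma distinct_dl: "distinct (dl N)"
proof (induction N)
  case 0 then show ?case by (simp add: dl_def)
next
  case (Suc N)
  have "distinct (row N)" unfolding row_def by (auto simp: distinct_map inj_on_def)
  moreover have "set (dl N) \<inter> set (row N) = {}"
    using set_dl[of _ N] by (fastforce simp: row_def)
  ultimately show ?case using Suc by (simp add: dl_Suc)
qed

lemma dl_prefix: "N \<le> M \<Longrightarrow> \<exists>ys. dl M = dl N @ ys"
proof (induction M rule: dec_induct)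
  case base then show ?case by simp
next
  case (step M) then show ?case by (auto simp: dl_Suc)
qed

lemma dl_mono: "m < length (dl N) \<Longrightarrow> N \<le> M \<Longrightarrow> dl M ! m = dl N ! m"
  using dl_prefix[of N M] by (auto simp: nth_append)

lemma diag_inj: "1 \<le> l1 \<Longrightarrow> 1 \<le> l2 \<Longrightarrow> diag l1 = diag l2 \<Longrightarrow> l1 = l2"
proof -
  assume a: "1 \<le> l1" "1 \<le> l2" "diag l1 = diag l2"
  define M where "M = max l1 l2"
  have i1: "l1 - 1 < length (dl l1)" "l2 - 1 < length (dl l2)" using a len_dl[of l1] len_dl[of l2] by auto
  have "diag l1 = dl M ! (l1 - 1)" "diag l2 = dl M ! (l2 - 1)"
    using dl_mono[OF i1(1), of M] dl_mono[OF i1(2), of M] by (auto simp: diag_dl M_def)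
  moreover have "l1 - 1 < length (dl M)" "l2 - 1 < length (dl M)" using len_dl[of M] a by (auto simp: M_def)
  ultimately have "l1 - 1 = l2 - 1" using a(3) distinct_dl[of M] nth_eq_iff_index_eq by metis
  then show ?thesis using a by simp
qed



definition good :: "(nat \<Rightarrow> 'u set) \<Rightarrow> 'u set \<Rightarrow> (nat \<times> nat) set \<Rightarrow> bool" where
  "good L T S \<longleftrightarrow> finite T \<and> finite (\<Inter>e\<in>S. L (snd e)) \<and> (\<forall>e\<in>S. acont (fst e) T (L (snd e)))"

lemma adm_good:
  assumes "adm L E T D"
  shows "good L T ((!) E ` D) \<and> (!) E ` D \<subseteq> set E \<and> last E \<in> (!) E ` D"
proof -
  have "E \<noteq> []" "length E - 1 \<in> D" "D \<subseteq> {..<length E}" using assms by (auto simp: adm_def)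
  moreover have "last E = E ! (length E - 1)" using \<open>E \<noteq> []\<close> by (simp add: last_conv_nth)
  moreover have "(\<Inter>e\<in>(!) E ` D. L (snd e)) = (\<Inter>d\<in>D. L (snd (E ! d)))" by auto
  ultimately show ?thesis using assms by (auto simp: adm_def good_def)
qed

lemma good_adm:
  assumes "E \<noteq> []" "good L T S" "S \<subseteq> set E" "last E \<in> S"
  shows "\<exists>D. adm L E T D"
proof -
  define D where "D = {d. d < length E \<and> E ! d \<in> S}"
  have img: "(!) E ` D = S"
  proof
    show "(!) E ` D \<subseteq> S" unfolding D_def by auto
    show "S \<subseteq> (!) E ` D"
    proof
      fix e assume "e \<in> S"
      then obtain d where "d < length E" "E ! d = e" using assms(3) by (metis in_set_conv_nth subsetD)
      then show "e \<in> (!) E ` D" using \<open>e \<in> S\<close> unfolding D_def by blast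
    qed
  qed
  have "(\<Inter>d\<in>D. L (snd (E ! d))) = (\<Inter>e\<in>S. L (snd e))" using img by auto
  moreover have "length E - 1 \<in> D" using assms(1,4) by (simp add: D_def last_conv_nth)
  ultimately have "adm L E T D" using assms img unfolding adm_def good_def D_def by auto
  then show ?thesis by blast
qed

lemma adm_card_bound:
  assumes "adm L E T D"
  shows "card T \<le> card (\<Inter>d\<in>D. L (snd (E ! d))) + (\<Sum>d\<in>D. fst (E ! d))"
proof -
  let ?I = "\<Inter>d\<in>D. L (snd (E ! d))"
  let ?U = "\<Union>d\<in>D. T - L (snd (E ! d))"
  have fT: "finite T" and fI: "finite ?I" and fD: "finite D"
    using assms by (auto simp: adm_def intro: finite_subset)
  have "T \<subseteq> ?I \<union> ?U" by auto
  moreover have "finite ?U" using fT by auto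
  ultimately have "card T \<le> card (?I \<union> ?U)" using fI by (intro card_mono) auto
  also have "\<dots> \<le> card ?I + card ?U" by (rule card_Un_le)
  also have "card ?U \<le> (\<Sum>d\<in>D. card (T - L (snd (E ! d))))" by (rule card_UN_le[OF fD])
  also have "\<dots> \<le> (\<Sum>d\<in>D. fst (E ! d))"
    using assms by (intro sum_mono) (auto simp: adm_def acont_def)
  finally show ?thesis by simp
qed

lemma adm_fin: "finite {card T | T. \<exists>D. adm L E T D}"
proof -
  let ?b = "\<lambda>D. card (\<Inter>d\<in>D. L (snd (E ! d))) + (\<Sum>d\<in>D. fst (E ! d))"
  have "{card T | T. \<exists>D. adm L E T D} \<subseteq> (\<Union>D\<in>Pow {..<length E}. {..?b D})"
  proof
    fix c assume "c \<in> {card T | T. \<exists>D. adm L E T D}"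
    then obtain T D where c: "c = card T" "adm L E T D" by blast
    then have "D \<in> Pow {..<length E}" "c \<le> ?b D" using adm_card_bound[of L E T D] by (auto simp: adm_def)
    then show "c \<in> (\<Union>D\<in>Pow {..<length E}. {..?b D})" by blast
  qed
  then show ?thesis by (rule finite_subset) auto
qed

lemma adm_mchk: "adm L E T D \<Longrightarrow> card T \<le> mchk L E"
  unfolding mchk_def using adm_fin[of L E] by (auto intro!: Max_ge)

definition pupto :: "'a \<Rightarrow> 'a list \<Rightarrow> 'a list" where
  "pupto x xs = takeWhile (\<lambda>y. y \<noteq> x) xs @ [x]"

lemma tw: "x \<notin> set A \<Longrightarrow> takeWhile (\<lambda>y. y \<noteq> x) (A @ x # B) = A"
  by (induct A) auto

lemma upto_take: "distinct xs \<Longrightarrow> k < length xs \<Longrightarrow> xs ! k = x \<Longrightarrow> take (Suc k) xs = pupto x xs"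
proof -
  assume a: "distinct xs" "k < length xs" "xs ! k = x"
  have xs: "xs = take k xs @ x # drop (Suc k) xs" using a by (metis id_take_nth_drop)
  have "x \<notin> set (take k xs)"
  proof
    assume "x \<in> set (take k xs)"
    then obtain m where m: "m < length (take k xs)" "take k xs ! m = x" by (auto simp: in_set_conv_nth)
    then have "m < k" "xs ! m = x" by auto
    then show False using a nth_eq_iff_index_eq[of xs m k] by auto
  qed
  then have "pupto x xs = take k xs @ [x]" unfolding pupto_def
    using tw[of x "take k xs" "drop (Suc k) xs"] xs by simp
  then show ?thesis using a by (simp add: take_Suc_conv_app_nth)
qed

lemma upto_app1: "x \<in> set A \<Longrightarrow> pupto x (A @ B) = pupto x A"
  unfolding pupto_def by (simp add: takeWhile_append1)

lemma upto_app2: "x \<notin> set A \<Longrightarrow> pupto x (A @ B) = A @ pupto x B"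
  unfolding pupto_def by (induct A) auto

lemma upto_cons: "pupto x (x # B) = [x]"
  unfolding pupto_def by simp

lemma last_upto: "last (pupto x xs) = x" unfolding pupto_def by simp



lemma step_unfold:
  assumes "noisy_run L ord Tset mstar"
  obtains q where "q \<le> l" "ord (Suc l) = take q (ord l) @ diag (Suc l) # drop q (ord l)"
     "\<forall>j. q + 1 < j \<and> j \<le> Suc l \<longrightarrow>
            mchk L (take (j - 1) (ord l) @ [diag (Suc l)]) \<le> mstar (ord l ! (j - 2))"
     "mstar (diag (Suc l)) = mchk L (take q (ord l) @ [diag (Suc l)])"
     "if \<exists>T D. adm L (take q (ord l) @ [diag (Suc l)]) T D
        then (\<exists>D. adm L (take q (ord l) @ [diag (Suc l)]) (Tset (diag (Suc l))) D)
             \<and> (\<forall>T D. adm L (take q (ord l) @ [diag (Suc l)]) T D \<longrightarrow> card T \<le> card (Tset (diag (Suc l))))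
        else Tset (diag (Suc l)) = {}"
proof -
  have "step_ok L ord Tset mstar (Suc l)" using assms unfolding noisy_run_def by simp
  then show ?thesis unfolding step_ok_def Let_def diff_Suc_1 by (elim exE conjE) (rule that; assumption)
qed

lemma basic_inv:
  assumes "noisy_run L ord Tset mstar"
  shows "length (ord l) = l \<and> set (ord l) = diag ` {1..l} \<and> distinct (ord l)"
proof (induction l)
  case 0 then show ?case using assms by (simp add: noisy_run_def)
next
  case (Suc l)
  obtain q where q: "q \<le> l" "ord (Suc l) = take q (ord l) @ diag (Suc l) # drop q (ord l)"
    using step_unfold[OF assms, of l] by metis
  have nin: "diag (Suc l) \<notin> set (ord l)"
  proof
    assume "diag (Suc l) \<in> set (ord l)"
    then obtain m where "m \<in> {1..l}" "diag (Suc l) = diag m" using Suc by auto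
    then show False using diag_inj[of "Suc l" m] by auto
  qed
  have s: "set (ord (Suc l)) = insert (diag (Suc l)) (set (ord l))"
  proof -
    have "set (ord l) = set (take q (ord l)) \<union> set (drop q (ord l))"
      by (metis append_take_drop_id set_append)
    then show ?thesis using q(2) by auto
  qed
  have "diag ` {1..Suc l} = insert (diag (Suc l)) (diag ` {1..l})"
    by (simp add: atLeastAtMostSuc_conv)
  moreover have "distinct (ord (Suc l))"
  proof -
    have "distinct (take q (ord l) @ drop q (ord l))" using Suc by simp
    then show ?thesis using q(2) nin Suc
    proof -
      have "set (take q (ord l)) \<inter> set (drop q (ord l)) = {}"
        using Suc by (simp add: set_take_disj_set_drop_if_distinct)
      moreover have "diag (Suc l) \<notin> set (take q (ord l))" "diag (Suc l) \<notin> set (drop q (ord l))"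
        using nin by (auto dest: in_set_takeD in_set_dropD)
      moreover have "distinct (take q (ord l))" "distinct (drop q (ord l))" using Suc by auto
      ultimately show ?thesis using q(2) by simp
    qed
  qed
  ultimately show ?case using Suc q s by simp
qed



lemma main_inv:
  assumes run: "noisy_run L ord Tset mstar" and l0: "1 \<le> l0" and x: "x = diag l0" and ll: "l0 \<le> l"
  shows "x \<in> set (ord l) \<and> set (pupto x (ord l0)) \<subseteq> set (pupto x (ord l))
     \<and> (\<forall>T S. good L T S \<longrightarrow> S \<subseteq> set (pupto x (ord l)) \<longrightarrow> x \<in> S \<longrightarrow> card T \<le> mstar x)"
  using ll
proof (induction l rule: dec_induct)
  case base
  obtain m where m: "l0 = Suc m" using l0 by (cases l0) auto
  obtain q where q: "q \<le> m" "ord (Suc m) = take q (ord m) @ x # drop q (ord m)"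
    "mstar x = mchk L (take q (ord m) @ [x])"
    using step_unfold[OF run, of m] x m by metis
  have nin: "x \<notin> set (ord m)"
  proof
    assume "x \<in> set (ord m)"
    then obtain m' where "m' \<in> {1..m}" "x = diag m'" using basic_inv[OF run, of m] by auto
    then show False using diag_inj[of l0 m'] x m by auto
  qed
  then have nt: "x \<notin> set (take q (ord m))" by (auto dest: in_set_takeD)
  have u: "pupto x (ord l0) = take q (ord m) @ [x]"
    using q(2) m upto_app2[OF nt] upto_cons by simp
  have "card T \<le> mstar x" if a: "good L T S" "S \<subseteq> set (pupto x (ord l0))" "x \<in> S" for T S
  proof -
    obtain D where "adm L (take q (ord m) @ [x]) T D"
      using good_adm[of "take q (ord m) @ [x]" L T S] a u by auto
    then show ?thesis using adm_mchk q(3) by metis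
  qed
  then show ?case using q(2) m by auto
next
  case (step l)
  let ?p = "ord l" and ?new = "diag (Suc l)"
  obtain q where q: "q \<le> l" "ord (Suc l) = take q ?p @ ?new # drop q ?p"
     "\<forall>j. q + 1 < j \<and> j \<le> Suc l \<longrightarrow>
            mchk L (take (j - 1) ?p @ [?new]) \<le> mstar (?p ! (j - 2))"
    using step_unfold[OF run, of l] by metis
  have ne: "?new \<noteq> x" using diag_inj[of "Suc l" l0] x l0 step by auto
  have bi: "length ?p = l" "distinct ?p" using basic_inv[OF run, of l] by auto
  have xp: "x \<in> set ?p" using step by blast
  show ?case
  proof (cases "x \<in> set (take q ?p)")
    case True
    have "pupto x (ord (Suc l)) = pupto x (take q ?p)" using q(2) upto_app1[OF True] by simp
    moreover have "pupto x ?p = pupto x (take q ?p)" using upto_app1[OF True, of "drop q ?p"] by simp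
    moreover have "x \<in> set (ord (Suc l))" using q(2) True by simp
    ultimately show ?thesis using step by simp
  next
    case False
    have u1: "pupto x (ord (Suc l)) = take q ?p @ ?new # pupto x (drop q ?p)"
      using q(2) upto_app2[OF False, of "?new # drop q ?p"] upto_app2[of x "[?new]" "drop q ?p"] ne by simp
    have u2: "pupto x ?p = take q ?p @ pupto x (drop q ?p)"
      using upto_app2[OF False, of "drop q ?p"] by simp
    have su: "set (pupto x (ord (Suc l))) = insert ?new (set (pupto x ?p))" using u1 u2 by auto
    obtain p where p: "p < length ?p" "?p ! p = x" using xp by (auto simp: in_set_conv_nth)
    have pq: "q \<le> p"
    proof (rule ccontr)
      assume "\<not> q \<le> p"
      then have "x \<in> set (take q ?p)" using p by (auto simp: in_set_conv_nth intro!: exI[of _ p])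
      then show False using False by simp
    qed
    have ut: "pupto x ?p = take (Suc p) ?p" using upto_take[OF bi(2) p] by simp
    have mc: "mchk L (pupto x ?p @ [?new]) \<le> mstar x"
      using q(3)[rule_format, of "p + 2"] pq p bi ut by simp
    have "card T \<le> mstar x" if a: "good L T S" "S \<subseteq> set (pupto x (ord (Suc l)))" "x \<in> S" for T S
    proof (cases "?new \<in> S")
      case True
      obtain D where "adm L (pupto x ?p @ [?new]) T D"
        using good_adm[of "pupto x ?p @ [?new]" L T S] a True su by auto
      then show ?thesis using adm_mchk mc le_trans by metis
    next
      case False
      then have "S \<subseteq> set (pupto x ?p)" using a su by auto
      then show ?thesis using step a by blast
    qed
    moreover have "x \<in> set (ord (Suc l))" using q(2) xp
      by (metis Un_iff append_take_drop_id list.set_intros(2) set_append)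
    ultimately show ?thesis using step su by blast
  qed
qed



lemma base_upto:
  assumes run: "noisy_run L ord Tset mstar"
    and o: "ord (Suc m) = take q (ord m) @ diag (Suc m) # drop q (ord m)"
  shows "pupto (diag (Suc m)) (ord (Suc m)) = take q (ord m) @ [diag (Suc m)]"
proof -
  let ?x = "diag (Suc m)"
  have nin: "?x \<notin> set (ord m)"
  proof
    assume "?x \<in> set (ord m)"
    then obtain m' where "m' \<in> {1..m}" "?x = diag m'" using basic_inv[OF run, of m] by auto
    then show False using diag_inj[of "Suc m" m'] by auto
  qed
  then have nt: "?x \<notin> set (take q (ord m))" by (auto dest: in_set_takeD)
  show ?thesis using o upto_app2[OF nt] upto_cons by simp
qed

theorem mainTheorem15:
  fixes L :: "nat \<Rightarrow> 'u set"
    and ord :: "nat \<Rightarrow> (nat \<times> nat) list"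
    and Tset :: "nat \<times> nat \<Rightarrow> 'u set"
    and mstar :: "nat \<times> nat \<Rightarrow> nat"
    and n i l k :: nat
  assumes "countable (UNIV :: 'u set)"
    and "infinite (UNIV :: 'u set)"
    and "\<forall>b \<ge> 1. infinite (L b)"
    and "noisy_run L ord Tset mstar"
    and "1 \<le> i"
    and "diag_pos (n, i) \<le> l"
    and "k < length (ord l)"
    and "ord l ! k = (n, i)"
  shows "finite (Tset (n, i))
    \<and> (\<forall>T D. adm L (take (Suc k) (ord l)) T D \<longrightarrow> card T \<le> card (Tset (n, i)))
    \<and> ((\<exists>T D. adm L (take (Suc k) (ord l)) T D)
         \<longrightarrow> (\<exists>D. adm L (take (Suc k) (ord l)) (Tset (n, i)) D))"
proof -
  note run = assms(4)
  define x where "x = (n, i)"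
  have bi: "length (ord l) = l" "set (ord l) = diag ` {1..l}" "distinct (ord l)"
    using basic_inv[OF run, of l] by auto
  have xin: "x \<in> set (ord l)" using assms(7,8) x_def by (metis nth_mem)
  then obtain l0 where l0: "l0 \<in> {1..l}" "x = diag l0" using bi by auto
  obtain m where m: "l0 = Suc m" using l0 by (cases l0) auto
  have dx: "diag (Suc m) = x" using l0 m by simp
  obtain q where q: "q \<le> m" "ord (Suc m) = take q (ord m) @ x # drop q (ord m)"
     "\<forall>j. q + 1 < j \<and> j \<le> Suc m \<longrightarrow>
            mchk L (take (j - 1) (ord m) @ [x]) \<le> mstar (ord m ! (j - 2))"
     "mstar x = mchk L (take q (ord m) @ [x])"
     "if \<exists>T D. adm L (take q (ord m) @ [x]) T D
        then (\<exists>D. adm L (take q (ord m) @ [x]) (Tset x) D)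
             \<and> (\<forall>T D. adm L (take q (ord m) @ [x]) T D \<longrightarrow> card T \<le> card (Tset x))
        else Tset x = {}"
    by (rule step_unfold[OF run, of m, unfolded dx])
  define E0 where "E0 = take q (ord m) @ [x]"
  have e0: "pupto x (ord l0) = E0" using base_upto[OF run, of m q] q(2) dx m E0_def by simp
  have q3: "if \<exists>T D. adm L E0 T D
        then (\<exists>D. adm L E0 (Tset x) D)
             \<and> (\<forall>T D. adm L E0 T D \<longrightarrow> card T \<le> card (Tset x))
        else Tset x = {}" using q(5) unfolding E0_def .
  define E where "E = take (Suc k) (ord l)"
  have e: "E = pupto x (ord l)" using upto_take[OF bi(3) assms(7)] assms(8) x_def E_def by simp
  have inv: "set E0 \<subseteq> set E"
     "\<And>T S. good L T S \<Longrightarrow> S \<subseteq> set E \<Longrightarrow> x \<in> S \<Longrightarrow> card T \<le> mstar x"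
    using main_inv[OF run, of l0 x l] l0 e0 e by auto
  have mle: "mchk L E0 \<le> card (Tset x)"
  proof (cases "\<exists>T D. adm L E0 T D")
    case True
    have "mchk L E0 \<in> {card T | T. \<exists>D. adm L E0 T D}"
    proof -
      have "{card T | T. \<exists>D. adm L E0 T D} \<noteq> {}" using True by blast
      then have "Max {card T | T. \<exists>D. adm L E0 T D} \<in> {card T | T. \<exists>D. adm L E0 T D}"
        using adm_fin[of L E0] by (rule Max_in[rotated])
      moreover have "mchk L E0 = Max {card T | T. \<exists>D. adm L E0 T D}"
        unfolding mchk_def by (rule if_P[OF True])
      ultimately show ?thesis by simp
    qed
    then show ?thesis using q3 unfolding if_P[OF True] by auto
  next
    case False then show ?thesis by (simp add: mchk_def)
  qed
  have c1: "finite (Tset x)"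
    using q3 by (cases "\<exists>T D. adm L E0 T D") (auto simp: adm_def)
  have c2: "card T \<le> card (Tset x)" if a: "adm L E T D" for T D
  proof -
    have "E \<noteq> []" using a by (simp add: adm_def)
    have "last E = x" using e last_upto by metis
    have g: "good L T ((!) E ` D)" "(!) E ` D \<subseteq> set E" "last E \<in> (!) E ` D" using adm_good[OF a] by auto
    then have "card T \<le> mstar x" using inv(2)[OF g(1) g(2)] g(3) \<open>last E = x\<close> by simp
    then show ?thesis using q(4) mle E0_def by simp
  qed
  have c3: "\<exists>D. adm L E (Tset x) D" if a: "adm L E T D" for T D
  proof (cases "\<exists>T D. adm L E0 T D")
    case True
    then obtain D0 where d0: "adm L E0 (Tset x) D0" using q3 unfolding if_P[OF True] by auto
    have "last E = x" using e last_upto by metis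
    moreover have "last E0 = x" by (simp add: E0_def)
    moreover have "E \<noteq> []" using a by (simp add: adm_def)
    moreover have g: "good L (Tset x) ((!) E0 ` D0)" "(!) E0 ` D0 \<subseteq> set E0" "last E0 \<in> (!) E0 ` D0" using adm_good[OF d0] by auto
    ultimately show ?thesis using inv(1) good_adm[of E L "Tset x" "(!) E0 ` D0"] by auto
  next
    case False
    then have z: "mstar x = 0" "Tset x = {}" using q3 q(4) unfolding if_not_P[OF False] by (simp_all add: mchk_def False E0_def[symmetric])
    have "last E = x" using e last_upto by metis
    have g: "good L T ((!) E ` D)" "(!) E ` D \<subseteq> set E" "last E \<in> (!) E ` D" using adm_good[OF a] by auto
    then have "card T \<le> 0" using inv(2)[OF g(1) g(2)] g(3) \<open>last E = x\<close> z by simp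
    moreover have "finite T" using a by (simp add: adm_def)
    ultimately have "T = {}" by simp
    then show ?thesis using a z by auto
  qed
  show ?thesis using c1 c2 c3 unfolding E_def x_def by blast
qed


end
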